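(* Let $n\geq 2$, $1\leq k\leq n-1$ and $w\in\mathfrak{S}_n$. The intersection (as sets of positions) of a maximal $k$-ascending section and a maximal $k$-descending section of $w$ is empty or consists of one element. Two distinct maximal $k$-ascending sections of $w$ do not intersect.
   Context: $\mathfrak{S}_n$ is the set of permutations $w=w_1\cdots w_n$ of $\{1,\dots,n\}$. A section of $w$ is a consecutive block $w_sw_{s+1}\cdots w_t$ ($s\le t$), identified with its set of positions $\{s,\dots,t\}$. A section $w_s\cdots w_t$ is a $k$-up if $s<t$ and $w_t-w_s\geq k$, and a $k$-down if $s<t$ and $w_s-w_t\geq k$; a $k$-up/$k$-down "in" $w_a\cdots w_b$ means one $w_s\cdots w_t$ with $a\le s<t\le b$. A section $w_i\cdots w_j$ ($i<j$) is $k$-ascending if $w_i=\min\{w_i,\dots,w_j\}$, $w_j=\max\{w_i,\dots,w_j\}$, $w_j-w_i\geq k$, and there is no $k$-down in $w_i\cdots w_j$. It is $k$-descending if $w_i=\max\{w_i,\dots,w_j\}$, $w_j=\min\{w_i,\dots,w_j\}$, $w_i-w_j\geq k$, and there is no $k$-up in $w_i\cdots w_j$. A $k$-ascending (resp. $k$-descending) section is maximal if it is not contained in another $k$-ascending (resp. $k$-descending) section. *)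

theory Defs
  imports "HOL-Combinatorics.Permutations"
begin

text \<open>A permutation w of {1..n} is a function nat => nat with w permutes {1..n};
  w i is the letter at position i. A section w_s..w_t (s <= t) is encoded by
  the pair (s,t), with position set {s..t}.\<close>

definition is_perm :: "nat \<Rightarrow> (nat \<Rightarrow> nat) \<Rightarrow> bool" where
  "is_perm n w \<longleftrightarrow> w permutes {1..n}"

definition has_kdown_in :: "(nat \<Rightarrow> nat) \<Rightarrow> nat \<Rightarrow> nat \<Rightarrow> nat \<Rightarrow> bool" where
  "has_kdown_in w k a b \<longleftrightarrow>
     (\<exists>s t. a \<le> s \<and> s < t \<and> t \<le> b \<and> int (w s) - int (w t) \<ge> int k)"

definition has_kup_in :: "(nat \<Rightarrow> nat) \<Rightarrow> nat \<Rightarrow> nat \<Rightarrow> nat \<Rightarrow> bool" where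
  "has_kup_in w k a b \<longleftrightarrow>
     (\<exists>s t. a \<le> s \<and> s < t \<and> t \<le> b \<and> int (w t) - int (w s) \<ge> int k)"

definition k_ascending :: "nat \<Rightarrow> (nat \<Rightarrow> nat) \<Rightarrow> nat \<Rightarrow> nat \<Rightarrow> nat \<Rightarrow> bool" where
  "k_ascending n w k i j \<longleftrightarrow>
     1 \<le> i \<and> i < j \<and> j \<le> n \<and>
     w i = Min (w ` {i..j}) \<and> w j = Max (w ` {i..j}) \<and>
     int (w j) - int (w i) \<ge> int k \<and> \<not> has_kdown_in w k i j"

definition k_descending :: "nat \<Rightarrow> (nat \<Rightarrow> nat) \<Rightarrow> nat \<Rightarrow> nat \<Rightarrow> nat \<Rightarrow> bool" where
  "k_descending n w k i j \<longleftrightarrow>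
     1 \<le> i \<and> i < j \<and> j \<le> n \<and>
     w i = Max (w ` {i..j}) \<and> w j = Min (w ` {i..j}) \<and>
     int (w i) - int (w j) \<ge> int k \<and> \<not> has_kup_in w k i j"

definition max_k_ascending :: "nat \<Rightarrow> (nat \<Rightarrow> nat) \<Rightarrow> nat \<Rightarrow> nat \<Rightarrow> nat \<Rightarrow> bool" where
  "max_k_ascending n w k i j \<longleftrightarrow> k_ascending n w k i j \<and>
     \<not> (\<exists>i' j'. k_ascending n w k i' j' \<and> {i..j} \<subset> {i'..j'})"

definition max_k_descending :: "nat \<Rightarrow> (nat \<Rightarrow> nat) \<Rightarrow> nat \<Rightarrow> nat \<Rightarrow> nat \<Rightarrow> bool" where
  "max_k_descending n w k i j \<longleftrightarrow> k_descending n w k i j \<and>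
     \<not> (\<exists>i' j'. k_descending n w k i' j' \<and> {i..j} \<subset> {i'..j'})"

end

theory Submission
  imports Defs
begin

lemma asc_D:
  assumes "k_ascending n w k i j"
  shows "1 \<le> i" "i < j" "j \<le> n" "\<And>x. i \<le> x \<Longrightarrow> x \<le> j \<Longrightarrow> w i \<le> w x"
    "\<And>x. i \<le> x \<Longrightarrow> x \<le> j \<Longrightarrow> w x \<le> w j"
    "int (w j) - int (w i) \<ge> int k"
  using assms unfolding k_ascending_def
  by (auto intro!: Min_le Max_ge)

lemma asc_D7:
  assumes "k_ascending n w k i j" "i \<le> s" "s < t" "t \<le> j"
  shows "int (w s) - int (w t) < int k"
proof -
  have "\<not> has_kdown_in w k i j" using assms(1) unfolding k_ascending_def by blast
  hence "\<not> (int (w s) - int (w t) \<ge> int k)" using assms(2-4) unfolding has_kdown_in_def by blast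
  thus ?thesis by linarith
qed

lemma desc_D:
  assumes "k_descending n w k i j"
  shows "1 \<le> i" "i < j" "j \<le> n" "\<And>x. i \<le> x \<Longrightarrow> x \<le> j \<Longrightarrow> w x \<le> w i"
    "\<And>x. i \<le> x \<Longrightarrow> x \<le> j \<Longrightarrow> w j \<le> w x"
    "int (w i) - int (w j) \<ge> int k"
  using assms unfolding k_descending_def
  by (auto intro!: Min_le Max_ge)

lemma desc_D7:
  assumes "k_descending n w k i j" "i \<le> s" "s < t" "t \<le> j"
  shows "int (w t) - int (w s) < int k"
proof -
  have "\<not> has_kup_in w k i j" using assms(1) unfolding k_descending_def by blast
  hence "\<not> (int (w t) - int (w s) \<ge> int k)" using assms(2-4) unfolding has_kup_in_def by blast
  thus ?thesis by linarith
qed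

lemma part1:
  assumes inj: "inj w" and A: "k_ascending n w k a b" and D: "k_descending n w k c d"
  shows "card ({a..b} \<inter> {c..d}) \<le> 1"
proof (rule ccontr)
  assume "\<not> ?thesis"
  have eq: "{a..b} \<inter> {c..d} = {max a c..min b d}" by auto
  have lt: "max a c < min b d"
  proof (rule ccontr)
    assume h: "\<not> max a c < min b d"
    have "card {max a c..min b d} = Suc (min b d) - max a c" by simp
    also have "\<dots> \<le> 1" using h by linarith
    finally show False using \<open>\<not> card ({a..b} \<inter> {c..d}) \<le> 1\<close> eq by simp
  qed
  note a = asc_D[OF A] and dd = desc_D[OF D]
  show False
  proof (cases "a \<le> c")
    case True
    show False
    proof (cases "d \<le> b")
      case True
      have "int (w c) - int (w d) < int k" using asc_D7[OF A, of c d] \<open>a \<le> c\<close> True dd(2) by simp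
      with dd(6) show False by linarith
    next
      case False
      hence "w c \<le> w b" "w b \<le> w c" using lt \<open>a\<le>c\<close> a(5)[of c] dd(4)[of b] by auto
      hence "c = b" using inj by (simp add: inj_eq)
      with lt \<open>a \<le> c\<close> False show False by simp
    qed
  next
    case False
    show False
    proof (cases "b \<le> d")
      case True
      have "int (w b) - int (w a) < int k" using desc_D7[OF D, of a b] False True a(2) by simp
      with a(6) show False by linarith
    next
      case F2: False
      hence "w a \<le> w d" "w d \<le> w a" using lt False a(4)[of d] dd(5)[of a] by auto
      hence "a = d" using inj by (simp add: inj_eq)
      with lt False F2 show False by simp
    qed
  qed
qed

lemma part2_aux:
  assumes A: "max_k_ascending n w k a b" and C: "max_k_ascending n w k c d"
    and ne: "(a, b) \<noteq> (c, d)" and ac: "a \<le> c"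
  shows "{a..b} \<inter> {c..d} = {}"
proof (rule ccontr)
  assume "\<not> ?thesis"
  hence cb: "c \<le> b" by auto
  have Aa: "k_ascending n w k a b" and Cc: "k_ascending n w k c d"
    using A C by (auto simp: max_k_ascending_def)
  note a = asc_D[OF Aa] and cc = asc_D[OF Cc]
  have bd: "b < d"
  proof (rule ccontr)
    assume "\<not> b < d"
    hence "{c..d} \<subset> {a..b}" using ac ne cc(2) by auto
    with C Aa show False unfolding max_k_ascending_def by blast
  qed
  have "k_ascending n w k a d"
    unfolding k_ascending_def has_kdown_in_def
  proof (intro conjI)
    show "1 \<le> a" "a < d" "d \<le> n" using a cc bd by auto
    have lo: "w a \<le> w x" if "a \<le> x" "x \<le> d" for x
    proof (cases "x \<le> b")
      case True then show ?thesis using a(4) that by auto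
    next
      case False
      then show ?thesis using a(4)[of c] cc(4)[of x] that ac cb by auto
    qed
    have hi: "w x \<le> w d" if "a \<le> x" "x \<le> d" for x
    proof (cases "c \<le> x")
      case True then show ?thesis using cc(5) that by auto
    next
      case False
      then show ?thesis using a(5)[of x] cc(5)[of b] that cb bd by auto
    qed
    show "w a = Min (w ` {a..d})"
      by (rule sym, rule Min_eqI) (use lo a bd in auto)
    show "w d = Max (w ` {a..d})"
      by (rule sym, rule Max_eqI) (use hi a bd in auto)
    show "int k \<le> int (w d) - int (w a)" using a(6) hi[of b] a(2) bd by auto
    show "\<not> (\<exists>s t. a \<le> s \<and> s < t \<and> t \<le> d \<and> int k \<le> int (w s) - int (w t))"
    proof
      assume "\<exists>s t. a \<le> s \<and> s < t \<and> t \<le> d \<and> int k \<le> int (w s) - int (w t)"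
      then obtain s t where st: "a \<le> s" "s < t" "t \<le> d" "int k \<le> int (w s) - int (w t)" by blast
      show False
      proof (cases "t \<le> b")
        case True with asc_D7[OF Aa, of s t] st show False by auto
      next
        case F: False
        show False
        proof (cases "c \<le> s")
          case True with asc_D7[OF Cc, of s t] st show False by auto
        next
          case False
          have "w s \<le> w b" using a(5)[of s] st False cb by auto
          moreover have "int (w b) - int (w t) < int k"
            using asc_D7[OF Cc, of b t] F st cb by auto
          ultimately show False using st(4) by linarith
        qed
      qed
    qed
  qed
  moreover have "{a..b} \<subset> {a..d}" using bd a(2) by auto
  ultimately show False using A unfolding max_k_ascending_def by blast
qed

theorem lemma2p6:
  fixes n k :: nat and w :: "nat \<Rightarrow> nat"
  assumes "n \<ge> 2" and "1 \<le> k" and "k \<le> n - 1" and "is_perm n w"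
  shows "(\<forall>a b c d. max_k_ascending n w k a b \<and> max_k_descending n w k c d
            \<longrightarrow> card ({a..b} \<inter> {c..d}) \<le> 1)
       \<and> (\<forall>a b c d. max_k_ascending n w k a b \<and> max_k_ascending n w k c d
            \<and> (a, b) \<noteq> (c, d) \<longrightarrow> {a..b} \<inter> {c..d} = {})"
proof (intro conjI allI impI)
  have inj: "inj w" using assms(4) unfolding is_perm_def by (rule permutes_inj)
  fix a b c d
  assume "max_k_ascending n w k a b \<and> max_k_descending n w k c d"
  then show "card ({a..b} \<inter> {c..d}) \<le> 1"
    using part1[OF inj] by (auto simp: max_k_ascending_def max_k_descending_def)
next
  fix a b c d
  assume h: "max_k_ascending n w k a b \<and> max_k_ascending n w k c d \<and> (a, b) \<noteq> (c, d)"
  show "{a..b} \<inter> {c..d} = {}"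
  proof (cases "a \<le> c")
    case True then show ?thesis using part2_aux h by blast
  next
    case False
    hence "{c..d} \<inter> {a..b} = {}" using part2_aux[of n w k c d a b] h by auto
    then show ?thesis by blast
  qed
qed

end
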